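(* Let $K$ be an infinite field, let $n\geq 5$ and $r$ be integers with $1<r<n-2$, and let $p(x,y)=[x,y]^r=(xy-yx)^r\in K\langle x,y\rangle$. Then $\mathrm{ord}(p)=r$ and $p(T_n(K))\neq T_n(K)^{(r-1)}$.
   Context: $T_n(K)$ denotes the algebra of $n\times n$ upper triangular matrices over $K$; $T_n(K)^{(t)}$ denotes the set of upper triangular matrices whose $(i,j)$ entries vanish whenever $j-i\leq t$. $p(T_n(K))=\{p(a,b):a,b\in T_n(K)\}$. The order $\mathrm{ord}(p)$ is the least positive integer $r$ with $p(T_r(K))=\{0\}$ but $p(T_{r+1}(K))\neq\{0\}$ (with $T_1(K)=K$). *)

theory Defs
  imports "Jordan_Normal_Form.Matrix"
begin

definition UT :: "nat \<Rightarrow> 'a::field mat set" where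
  "UT n = {A. A \<in> carrier_mat n n \<and> upper_triangular A}"

text \<open>T_n(K)^(t): upper triangular n x n matrices whose (i,j) entries vanish
  whenever j - i \<le> t (indices 0-based, differences as integers).\<close>
definition UT_strict :: "nat \<Rightarrow> int \<Rightarrow> 'a::field mat set" where
  "UT_strict n t = {A. A \<in> UT n \<and>
     (\<forall>i<n. \<forall>j<n. int j - int i \<le> t \<longrightarrow> A $$ (i,j) = 0)}"

definition comm_pow :: "nat \<Rightarrow> 'a::field mat \<Rightarrow> 'a mat \<Rightarrow> 'a mat" where
  "comm_pow r a b = (a * b - b * a) ^\<^sub>m r"

definition image_UT :: "('a::field mat \<Rightarrow> 'a mat \<Rightarrow> 'a mat) \<Rightarrow> nat \<Rightarrow> 'a mat set" where
  "image_UT p n = {p a b | a b. a \<in> UT n \<and> b \<in> UT n}"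

definition ord_poly :: "('a::field mat \<Rightarrow> 'a mat \<Rightarrow> 'a mat) \<Rightarrow> nat" where
  "ord_poly p = (LEAST r. 0 < r \<and> image_UT p r = {0\<^sub>m r r}
                          \<and> image_UT p (Suc r) \<noteq> {0\<^sub>m (Suc r) (Suc r)})"

end

theory Submission
  imports Defs
begin

definition lowz :: "nat \<Rightarrow> nat \<Rightarrow> 'a::field mat \<Rightarrow> bool" where
  "lowz n s A \<longleftrightarrow> A \<in> carrier_mat n n \<and> (\<forall>i<n. \<forall>j<n. j < i + s \<longrightarrow> A $$ (i,j) = 0)"

lemma mult_entry:
  assumes "A \<in> carrier_mat n n" "B \<in> carrier_mat n n" "i < n" "j < n"
  shows "(A * B) $$ (i,j) = (\<Sum>k\<in>{0..<n}. A $$ (i,k) * B $$ (k,j))"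
  using assms by (simp add: scalar_prod_def)

lemma mult_low:
  assumes A: "lowz n s A" and B: "lowz n t B"
  shows "lowz n (s+t) (A*B)"
    and "i+s+t < n \<Longrightarrow> (A*B) $$ (i,i+s+t) = A $$ (i,i+s) * B $$ (i+s,i+s+t)"
proof -
  have cA: "A \<in> carrier_mat n n" and zA: "\<And>i j. i<n \<Longrightarrow> j<n \<Longrightarrow> j < i+s \<Longrightarrow> A$$(i,j) = 0"
    using A unfolding lowz_def by auto
  have cB: "B \<in> carrier_mat n n" and zB: "\<And>i j. i<n \<Longrightarrow> j<n \<Longrightarrow> j < i+t \<Longrightarrow> B$$(i,j) = 0"
    using B unfolding lowz_def by auto
  show "lowz n (s+t) (A*B)"
    unfolding lowz_def
  proof (intro conjI allI impI)
    show "A * B \<in> carrier_mat n n" using cA cB by simp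
    fix i j assume ij: "i < n" "j < n" "j < i + (s+t)"
    have "(A * B) $$ (i,j) = (\<Sum>k\<in>{0..<n}. A $$ (i,k) * B $$ (k,j))"
      using mult_entry[OF cA cB ij(1,2)] .
    also have "\<dots> = 0"
    proof (rule sum.neutral, intro ballI)
      fix k assume k: "k \<in> {0..<n}"
      show "A $$ (i,k) * B $$ (k,j) = 0"
      proof (cases "k < i + s")
        case True then show ?thesis using zA[of i k] ij k by simp
      next
        case False then show ?thesis using zB[of k j] ij k by simp
      qed
    qed
    finally show "(A * B) $$ (i,j) = 0" .
  qed
  assume lt: "i+s+t < n"
  have "(A * B) $$ (i,i+s+t) = (\<Sum>k\<in>{0..<n}. A $$ (i,k) * B $$ (k,i+s+t))"
    using mult_entry[OF cA cB] lt by simp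
  also have "\<dots> = A $$ (i,i+s) * B $$ (i+s,i+s+t) + (\<Sum>k\<in>{0..<n} - {i+s}. A $$ (i,k) * B $$ (k,i+s+t))"
    using lt by (subst sum.remove[of _ "i+s"]) auto
  also have "(\<Sum>k\<in>{0..<n} - {i+s}. A $$ (i,k) * B $$ (k,i+s+t)) = 0"
  proof (rule sum.neutral, intro ballI)
    fix k assume k: "k \<in> {0..<n} - {i+s}"
    show "A $$ (i,k) * B $$ (k,i+s+t) = 0"
    proof (cases "k < i + s")
      case True then show ?thesis using zA[of i k] lt k by simp
    next
      case False then show ?thesis using zB[of k "i+s+t"] lt k by simp
    qed
  qed
  finally show "(A*B) $$ (i,i+s+t) = A $$ (i,i+s) * B $$ (i+s,i+s+t)" by simp
qed

lemma pow_low: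
  assumes N: "lowz n 1 N"
  shows "lowz n m (N ^\<^sub>m m) \<and> (\<forall>i. i + m < n \<longrightarrow> (N ^\<^sub>m m) $$ (i,i+m) = (\<Prod>k\<in>{i..<i+m}. N $$ (k,k+1)))"
proof (induction m)
  case 0
  have c: "N \<in> carrier_mat n n" using N unfolding lowz_def by auto
  then show ?case unfolding lowz_def by auto
next
  case (Suc m)
  have L: "lowz n (m+1) (N ^\<^sub>m m * N)" using mult_low(1)[OF Suc[THEN conjunct1] N] .
  show ?case
  proof (intro conjI allI impI)
    show "lowz n (Suc m) (N ^\<^sub>m Suc m)" using L by simp
    fix i assume i: "i + Suc m < n"
    have "(N ^\<^sub>m Suc m) $$ (i, i + Suc m) = (N ^\<^sub>m m * N) $$ (i, i+m+1)" by simp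
    also have "\<dots> = (N ^\<^sub>m m) $$ (i,i+m) * N $$ (i+m,i+m+1)"
      using mult_low(2)[OF Suc[THEN conjunct1] N, of i] i by simp
    also have "\<dots> = (\<Prod>k\<in>{i..<i+m}. N $$ (k,k+1)) * N $$ (i+m,i+m+1)"
      using Suc[THEN conjunct2] i by simp
    also have "\<dots> = (\<Prod>k\<in>{i..<i+Suc m}. N $$ (k,k+1))" by simp
    finally show "(N ^\<^sub>m Suc m) $$ (i, i + Suc m) = (\<Prod>k\<in>{i..<i+Suc m}. N $$ (k,k+1))" .
  qed
qed

lemma UT_lowz: "a \<in> UT n \<Longrightarrow> lowz n 0 a"
  unfolding UT_def lowz_def by (auto intro: upper_triangularD)

lemma comm_lowz:
  assumes "a \<in> UT n" "b \<in> UT n"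
  shows "lowz n 1 (a*b - b*a)"
proof -
  have la: "lowz n 0 a" and lb: "lowz n 0 b" using assms UT_lowz by auto
  have ab: "lowz n 0 (a*b)" and ba: "lowz n 0 (b*a)" using mult_low(1)[OF la lb] mult_low(1)[OF lb la] by auto
  have ca: "a \<in> carrier_mat n n" and cb: "b \<in> carrier_mat n n" using la lb unfolding lowz_def by auto
  show ?thesis unfolding lowz_def
  proof (intro conjI allI impI)
    show "a * b - b * a \<in> carrier_mat n n" using ca cb by (auto intro: minus_carrier_mat)
    fix i j assume ij: "i < n" "j < n" "j < i + 1"
    show "(a * b - b * a) $$ (i, j) = 0"
    proof (cases "j < i")
      case True
      then show ?thesis using ab ba ij ca cb unfolding lowz_def by auto
    next
      case False
      then have "j = i" using ij by simp
      moreover have "(a*b) $$ (i,i) = a $$ (i,i) * b $$ (i,i)" using mult_low(2)[OF la lb, of i] ij by simp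
      moreover have "(b*a) $$ (i,i) = b $$ (i,i) * a $$ (i,i)" using mult_low(2)[OF lb la, of i] ij by simp
      ultimately show ?thesis using ij ca cb by simp
    qed
  qed
qed

lemma comm_pow_zero:
  assumes "a \<in> UT m" "b \<in> UT m" "m \<le> r"
  shows "comm_pow r a b = 0\<^sub>m m m"
proof -
  have L: "lowz m r ((a*b - b*a) ^\<^sub>m r)" using pow_low[OF comm_lowz[OF assms(1,2)]] by blast
  have c: "(a*b - b*a) ^\<^sub>m r \<in> carrier_mat m m" using L unfolding lowz_def by blast
  have cab: "a \<in> carrier_mat m m" "b \<in> carrier_mat m m" using assms(1,2) unfolding UT_def by auto
  have z: "\<And>i j. i < m \<Longrightarrow> j < m \<Longrightarrow> ((a*b - b*a) ^\<^sub>m r) $$ (i,j) = 0"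
  proof -
    fix i j assume ij: "i < m" "j < m"
    then have "j < i + r" using assms(3) by linarith
    then show "((a*b - b*a) ^\<^sub>m r) $$ (i,j) = 0" using L ij unfolding lowz_def by blast
  qed
  show ?thesis unfolding comm_pow_def
  proof (rule eq_matI)
    fix i j assume "i < dim_row (0\<^sub>m m m :: 'a mat)" "j < dim_col (0\<^sub>m m m :: 'a mat)"
    then have ij: "i < m" "j < m" by auto
    show "((a*b - b*a) ^\<^sub>m r) $$ (i,j) = (0\<^sub>m m m :: 'a mat) $$ (i,j)"
      using z[OF ij] ij by simp
  next
    show "dim_row ((a*b - b*a) ^\<^sub>m r) = dim_row (0\<^sub>m m m :: 'a mat)" using c by auto
  next
    show "dim_col ((a*b - b*a) ^\<^sub>m r) = dim_col (0\<^sub>m m m :: 'a mat)" using c by auto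
  qed
qed

lemma zero_UT: "0\<^sub>m m m \<in> (UT m :: 'a::field mat set)"
  unfolding UT_def upper_triangular_def by simp

lemma image_small:
  assumes "m \<le> r"
  shows "image_UT (comm_pow r :: 'a::field mat \<Rightarrow> 'a mat \<Rightarrow> 'a mat) m = {0\<^sub>m m m}"
proof -
  have "comm_pow r (0\<^sub>m m m) (0\<^sub>m m m :: 'a mat) = 0\<^sub>m m m"
    using comm_pow_zero[OF zero_UT zero_UT assms] .
  then have "0\<^sub>m m m \<in> image_UT (comm_pow r :: 'a::field mat \<Rightarrow> 'a mat \<Rightarrow> 'a mat) m"
  proof -
    have z: "0\<^sub>m m m \<in> (UT m :: 'a mat set)" by (rule zero_UT)
    have "\<exists>a b. 0\<^sub>m m m = comm_pow r a b \<and> a \<in> UT m \<and> (b::'a mat) \<in> UT m"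
      by (rule exI[where x="0\<^sub>m m m"], rule exI[where x="0\<^sub>m m m"]) (use z \<open>comm_pow r (0\<^sub>m m m) (0\<^sub>m m m :: 'a mat) = 0\<^sub>m m m\<close> in simp)
    then show ?thesis unfolding image_UT_def by (simp only: mem_Collect_eq)
  qed
  moreover have "image_UT (comm_pow r :: 'a::field mat \<Rightarrow> 'a mat \<Rightarrow> 'a mat) m \<subseteq> {0\<^sub>m m m}"
  proof
    fix x assume "x \<in> image_UT (comm_pow r :: 'a::field mat \<Rightarrow> 'a mat \<Rightarrow> 'a mat) m"
    then obtain a b where "a \<in> UT m" "b \<in> UT m" "x = comm_pow r a b" unfolding image_UT_def by blast
    then show "x \<in> {0\<^sub>m m m}" using comm_pow_zero[of a m b r] assms by simp
  qed
  ultimately show ?thesis by blast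
qed

lemma witness:
  "image_UT (comm_pow r :: 'a::field mat \<Rightarrow> 'a mat \<Rightarrow> 'a mat) (Suc r) \<noteq> {0\<^sub>m (Suc r) (Suc r)}"
proof
  define n where "n = Suc r"
  define a :: "'a mat" where "a = mat n n (\<lambda>(i,j). if i = j \<and> odd i then 1 else 0)"
  define b :: "'a mat" where "b = mat n n (\<lambda>(i,j). if j = i + 1 then 1 else 0)"
  have aU: "a \<in> UT n" unfolding UT_def a_def by auto
  have bU: "b \<in> UT n" unfolding UT_def b_def by auto
  have la: "lowz n 0 a" using aU by (rule UT_lowz)
  have lb: "lowz n 1 b" unfolding lowz_def b_def by auto
  define N where "N = a*b - b*a"
  have lN: "lowz n 1 N" unfolding N_def using comm_lowz[OF aU bU] .
  have dims: "dim_row a = n" "dim_col a = n" "dim_row b = n" "dim_col b = n"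
    by (simp_all add: a_def b_def)
  have Nk: "N $$ (k,k+1) \<noteq> 0" if k: "k+1 < n" for k
  proof -
    have e: "N $$ (k,k+1) = (a*b) $$ (k,k+1) - (b*a) $$ (k,k+1)"
      unfolding N_def using k dims by simp
    have ab: "(a*b) $$ (k,k+1) = a $$ (k,k) * b $$ (k,k+1)"
      using mult_low(2)[OF la lb, of k] k by simp
    have ba: "(b*a) $$ (k,k+1) = b $$ (k,k+1) * a $$ (k+1,k+1)"
      using mult_low(2)[OF lb la, of k] k by simp
    have v1: "a $$ (k,k) = (if odd k then 1 else 0)" using k by (simp add: a_def)
    have v2: "a $$ (k+1,k+1) = (if odd (k+1) then 1 else 0)" using k by (simp add: a_def)
    have v3: "b $$ (k,k+1) = 1" using k by (simp add: b_def)
    have "N $$ (k,k+1) = (if odd k then 1 else 0) - (if odd (k+1) then 1 else 0)"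
      using e ab ba v1 v2 v3 by simp
    then show ?thesis by (cases "odd k") auto
  qed
  have pl: "\<forall>i. i + r < n \<longrightarrow> (N ^\<^sub>m r) $$ (i,i+r) = (\<Prod>k\<in>{i..<i+r}. N $$ (k,k+1))"
    using pow_low[OF lN, of r] by blast
  have "(N ^\<^sub>m r) $$ (0,0+r) = (\<Prod>k\<in>{0..<0+r}. N $$ (k,k+1))"
    using pl n_def by simp
  also have "\<dots> \<noteq> 0" using Nk n_def by simp
  finally have ne: "(N ^\<^sub>m r) $$ (0,r) \<noteq> 0" by simp
  assume eq: "image_UT (comm_pow r :: 'a::field mat \<Rightarrow> 'a mat \<Rightarrow> 'a mat) (Suc r) = {0\<^sub>m (Suc r) (Suc r)}"
  have "comm_pow r a b \<in> image_UT (comm_pow r :: 'a::field mat \<Rightarrow> 'a mat \<Rightarrow> 'a mat) (Suc r)"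
    unfolding image_UT_def using aU bU n_def by blast
  then have "N ^\<^sub>m r = 0\<^sub>m n n" using eq unfolding comm_pow_def N_def n_def by auto
  then show False using ne n_def by simp
qed

theorem mainTheorem9:
  fixes n r :: nat
  assumes "infinite (UNIV :: 'a::field set)"
    and "n \<ge> 5" and "1 < r" and "r + 2 < n"
  shows "ord_poly (comm_pow r :: 'a mat \<Rightarrow> 'a mat \<Rightarrow> 'a mat) = r
         \<and> image_UT (comm_pow r :: 'a mat \<Rightarrow> 'a mat \<Rightarrow> 'a mat) n \<noteq> UT_strict n (int r - 1)"
proof
  show "ord_poly (comm_pow r :: 'a mat \<Rightarrow> 'a mat \<Rightarrow> 'a mat) = r"
    unfolding ord_poly_def
  proof (rule Least_equality)
    show "0 < r \<and> image_UT (comm_pow r :: 'a mat \<Rightarrow> 'a mat \<Rightarrow> 'a mat) r = {0\<^sub>m r r}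
          \<and> image_UT (comm_pow r :: 'a mat \<Rightarrow> 'a mat \<Rightarrow> 'a mat) (Suc r) \<noteq> {0\<^sub>m (Suc r) (Suc r)}"
      using assms(3) image_small[of r r] witness[of r] by auto
  next
    fix y assume y: "0 < y \<and> image_UT (comm_pow r :: 'a mat \<Rightarrow> 'a mat \<Rightarrow> 'a mat) y = {0\<^sub>m y y}
          \<and> image_UT (comm_pow r :: 'a mat \<Rightarrow> 'a mat \<Rightarrow> 'a mat) (Suc y) \<noteq> {0\<^sub>m (Suc y) (Suc y)}"
    show "r \<le> y"
    proof (rule ccontr)
      assume "\<not> r \<le> y"
      then have "Suc y \<le> r" by simp
      then show False using y image_small[of "Suc y" r] by auto
    qed
  qed
next
  define A :: "'a mat" where "A = mat n n (\<lambda>(i,j). if (i = 0 \<and> j = r) \<or> (i = 2 \<and> j = r + 2) then 1 else 0)"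
  have AS: "A \<in> UT_strict n (int r - 1)"
    unfolding UT_strict_def UT_def A_def using assms by auto
  have AnI: "A \<notin> image_UT (comm_pow r :: 'a mat \<Rightarrow> 'a mat \<Rightarrow> 'a mat) n"
  proof
    assume "A \<in> image_UT (comm_pow r :: 'a mat \<Rightarrow> 'a mat \<Rightarrow> 'a mat) n"
    then obtain a b where aU: "a \<in> UT n" and bU: "b \<in> UT n" and Aeq: "A = comm_pow r a b"
      unfolding image_UT_def by blast
    define N where "N = a*b - b*a"
    have lN: "lowz n 1 N" unfolding N_def using comm_lowz[OF aU bU] .
    have P: "\<And>i. i + r < n \<Longrightarrow> A $$ (i,i+r) = (\<Prod>k\<in>{i..<i+r}. N $$ (k,k+1))"
      using pow_low[OF lN] Aeq unfolding comm_pow_def N_def by auto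
    have "(\<Prod>k\<in>{0..<0+r}. N $$ (k,k+1)) \<noteq> 0" using P[of 0] assms by (simp add: A_def)
    then have h0: "\<And>k. k < r \<Longrightarrow> N $$ (k,k+1) \<noteq> 0" by auto
    have "(\<Prod>k\<in>{2..<2+r}. N $$ (k,k+1)) \<noteq> 0" using P[of 2] assms by (simp add: A_def)
    then have h2: "N $$ (r,r+1) \<noteq> 0" using assms by auto
    have e1: "A $$ (1,1+r) = 0" using assms by (simp add: A_def)
    have e2: "A $$ (1,1+r) = (\<Prod>k\<in>{1..<1+r}. N $$ (k,k+1))" using P[of 1] assms by simp
    have "(\<Prod>k\<in>{1..<1+r}. N $$ (k,k+1)) = 0" using e1 e2 by (simp only:)
    then have "\<exists>k\<in>{1..<1+r}. N $$ (k,k+1) = 0" by (simp only: prod_zero_iff[OF finite_atLeastLessThan])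
    then obtain k where k1: "k \<in> {1..<1+r}" and k2: "N $$ (k,k+1) = 0" by blast
    show False
    proof (cases "k < r")
      case True then show False using h0 k2 by blast
    next
      case False then have "k = r" using k1 by simp
      then show False using h2 k2 by simp
    qed
  qed
  show "image_UT (comm_pow r :: 'a mat \<Rightarrow> 'a mat \<Rightarrow> 'a mat) n \<noteq> UT_strict n (int r - 1)"
    using AS AnI by blast
qed

end
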